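(* Let $p$ be an odd prime and let $G$ be a pro-$p$-group with $G/[G,G]\cong(\mathbb{Z}/p\mathbb{Z})^d$ for some $d\ge 0$. Let $\rho:G\to\mathrm{GL}_n^{(1)}(\mathbb{Z}_p)$ be a continuous homomorphism. If $\rho(G)\ne1$ then $\rho(G)\not\subseteq\mathrm{GL}_n^{(2)}(\mathbb{Z}_p)$.
   Context: $\mathrm{GL}_n^{(k)}(\mathbb{Z}_p)=\{X\in\mathrm{GL}_n(\mathbb{Z}_p): X\equiv 1 \bmod p^k\}$; $[G,G]$ denotes the closed commutator subgroup. *)

theory Defs
  imports "HOL-Analysis.Analysis" "HOL-Algebra.Algebra"
begin

definition topological_group :: "('a, 'b) monoid_scheme \<Rightarrow> 'a topology \<Rightarrow> bool" where
  "topological_group G T \<longleftrightarrow> group G \<and> topspace T = carrier G \<and>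
     continuous_map (prod_topology T T) T (\<lambda>(x, y). x \<otimes>\<^bsub>G\<^esub> y) \<and>
     continuous_map T T (\<lambda>x. inv\<^bsub>G\<^esub> x)"

definition totally_disconnected_space :: "'a topology \<Rightarrow> bool" where
  "totally_disconnected_space T \<longleftrightarrow>
     (\<forall>S. connectedin T S \<longrightarrow> (\<forall>x\<in>S. \<forall>y\<in>S. x = y))"

definition pro_p_group :: "nat \<Rightarrow> ('a, 'b) monoid_scheme \<Rightarrow> 'a topology \<Rightarrow> bool" where
  "pro_p_group p G T \<longleftrightarrow> topological_group G T \<and> compact_space T \<and> Hausdorff_space T \<and>
     totally_disconnected_space T \<and>
     (\<forall>N. N \<lhd> G \<longrightarrow> openin T N \<longrightarrow> (\<exists>e. card (rcosets\<^bsub>G\<^esub> N) = p ^ e))"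

definition closed_commutator :: "('a, 'b) monoid_scheme \<Rightarrow> 'a topology \<Rightarrow> 'a set" where
  "closed_commutator G T = T closure_of (derived G (carrier G))"

text \<open>A matrix over Z_p is represented as the compatible system of its reductions mod p^k:
  M k i j is the (i,j) entry reduced mod p^k, an integer in [0, p^k); entries with
  indices outside [0,n) are 0. (Z_p = lim Z/p^k, so M_n(Z_p) = lim M_n(Z/p^k).)\<close>

definition padic_mat :: "nat \<Rightarrow> nat \<Rightarrow> (nat \<Rightarrow> nat \<Rightarrow> nat \<Rightarrow> int) set" where
  "padic_mat p n = {M. (\<forall>k i j. 0 \<le> M k i j \<and> M k i j < int p ^ k) \<and>
      (\<forall>k i j. \<not> (i < n \<and> j < n) \<longrightarrow> M k i j = 0) \<and>
      (\<forall>k i j. M k i j = M (Suc k) i j mod (int p ^ k))}"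

definition padic_one :: "nat \<Rightarrow> nat \<Rightarrow> nat \<Rightarrow> nat \<Rightarrow> nat \<Rightarrow> int" where
  "padic_one p n = (\<lambda>k i j. if i = j \<and> i < n then 1 mod (int p ^ k) else 0)"

definition padic_mult :: "nat \<Rightarrow> nat \<Rightarrow> (nat \<Rightarrow> nat \<Rightarrow> nat \<Rightarrow> int) \<Rightarrow> (nat \<Rightarrow> nat \<Rightarrow> nat \<Rightarrow> int)
    \<Rightarrow> nat \<Rightarrow> nat \<Rightarrow> nat \<Rightarrow> int" where
  "padic_mult p n A B = (\<lambda>k i j. if i < n \<and> j < n
      then (\<Sum>l<n. A k i l * B k l j) mod (int p ^ k) else 0)"

text \<open>GL_n^{(m)}(Z_p) = {X in GL_n(Z_p). X = 1 mod p^m} (for m \<ge> 1; such X are automatically invertible).\<close>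
definition GL_cong :: "nat \<Rightarrow> nat \<Rightarrow> nat \<Rightarrow> (nat \<Rightarrow> nat \<Rightarrow> nat \<Rightarrow> int) set" where
  "GL_cong p n m = {M \<in> padic_mat p n. M m = padic_one p n m}"

definition GL1_group :: "nat \<Rightarrow> nat \<Rightarrow> (nat \<Rightarrow> nat \<Rightarrow> nat \<Rightarrow> int) monoid" where
  "GL1_group p n = \<lparr>carrier = GL_cong p n 1, mult = padic_mult p n, one = padic_one p n\<rparr>"

definition GL1_topology :: "nat \<Rightarrow> nat \<Rightarrow> (nat \<Rightarrow> nat \<Rightarrow> nat \<Rightarrow> int) topology" where
  "GL1_topology p n = topology_generated_by
     {{M \<in> GL_cong p n 1. M k = A} | k A. True}"

end

theory Submission
  imports Defs
begin


lemma product_group_pow: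
  assumes "f \<in> carrier (product_group I G)" "\<And>i. i \<in> I \<Longrightarrow> group (G i)"
  shows "f [^]\<^bsub>product_group I G\<^esub> (m::nat) = (\<lambda>i\<in>I. f i [^]\<^bsub>G i\<^esub> m)"
proof (induction m)
  case 0 then show ?case by simp
next
  case (Suc m)
  have "f [^]\<^bsub>product_group I G\<^esub> Suc m = f [^]\<^bsub>product_group I G\<^esub> m \<otimes>\<^bsub>product_group I G\<^esub> f" by simp
  also have "\<dots> = (\<lambda>i\<in>I. f i [^]\<^bsub>G i\<^esub> m \<otimes>\<^bsub>G i\<^esub> f i)" by (simp add: Suc cong: restrict_cong)
  also have "\<dots> = (\<lambda>i\<in>I. f i [^]\<^bsub>G i\<^esub> Suc m)" by simp
  finally show ?case .
qed

lemma quot_pow: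
  assumes G: "group G" and N: "N \<lhd> G" and p: "p > 0"
    and iso: "G Mod N \<cong> product_group {..<d} (\<lambda>_. integer_mod_group p)"
    and g: "g \<in> carrier G"
  shows "g [^]\<^bsub>G\<^esub> p \<in> N"
proof -
  interpret normal N G by (rule N)
  let ?P = "product_group {..<d} (\<lambda>_. integer_mod_group p)"
  obtain \<phi> where phi: "\<phi> \<in> iso (G Mod N) ?P" using iso unfolding is_iso_def by blast
  have gQ: "group (G Mod N)" by (rule factorgroup_is_group)
  have gP: "group ?P" by (rule product_group) simp
  have a: "N #>\<^bsub>G\<^esub> g \<in> carrier (G Mod N)" using g by (simp add: FactGroup_def RCOSETS_def) blast
  have hom: "\<phi> \<in> hom (G Mod N) ?P" using phi by (simp add: iso_def)
  have pa: "\<phi> (N #>\<^bsub>G\<^esub> g) \<in> carrier ?P" using hom a by (simp add: hom_def Pi_def)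
  have "\<phi> ((N #>\<^bsub>G\<^esub> g) [^]\<^bsub>G Mod N\<^esub> p) = \<phi> (N #>\<^bsub>G\<^esub> g) [^]\<^bsub>?P\<^esub> p"
    using hom_nat_pow[OF hom a gQ gP] .
  also have "\<dots> = (\<lambda>i\<in>{..<d}. \<phi> (N #>\<^bsub>G\<^esub> g) i [^]\<^bsub>integer_mod_group p\<^esub> p)"
    by (rule product_group_pow[OF pa]) simp
  also have "\<dots> = \<one>\<^bsub>?P\<^esub>"
    by (simp add: restrict_def fun_eq_iff)
  also have "\<dots> = \<phi> \<one>\<^bsub>G Mod N\<^esub>" using hom_one[OF hom gQ gP] by simp
  finally have "(N #>\<^bsub>G\<^esub> g) [^]\<^bsub>G Mod N\<^esub> p = \<one>\<^bsub>G Mod N\<^esub>"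
    using phi unfolding iso_def bij_betw_def inj_on_def
  proof -
    have inj: "inj_on \<phi> (carrier (G Mod N))" using phi by (simp add: iso_def bij_betw_def)
    show "\<phi> ((N #>\<^bsub>G\<^esub> g) [^]\<^bsub>G Mod N\<^esub> p) = \<phi> \<one>\<^bsub>G Mod N\<^esub> \<Longrightarrow> ?thesis"
      by (rule inj_onD[OF inj _ monoid.nat_pow_closed[OF group.is_monoid[OF gQ] a] monoid.one_closed[OF group.is_monoid[OF gQ]]])
  qed
  hence "N #>\<^bsub>G\<^esub> (g [^]\<^bsub>G\<^esub> p) = N" using FactGroup_pow[OF g] by (simp add: FactGroup_def)
  moreover have "g [^]\<^bsub>G\<^esub> p \<in> N #>\<^bsub>G\<^esub> (g [^]\<^bsub>G\<^esub> p)" using g by (simp add: rcos_self subgroup_axioms)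
  ultimately show ?thesis by simp
qed



lemma cl_invariant:
  assumes "continuous_map T T f" "f ` N \<subseteq> N"
  shows "f ` (T closure_of N) \<subseteq> T closure_of N"
  using continuous_map_image_closure_subset[OF assms(1), of N] closure_of_mono[OF assms(2), of T] by blast

lemma tg_lmult:
  assumes "topological_group G T" "x \<in> carrier G"
  shows "continuous_map T T (\<lambda>y. x \<otimes>\<^bsub>G\<^esub> y)"
proof -
  have m: "continuous_map (prod_topology T T) T (\<lambda>(x, y). x \<otimes>\<^bsub>G\<^esub> y)"
    using assms by (simp add: topological_group_def)
  have "continuous_map T (prod_topology T T) (\<lambda>y. (x, y))"
    using assms by (intro continuous_map_pairedI) (auto simp: topological_group_def)
  from continuous_map_compose[OF this m] show ?thesis by (simp add: o_def)
qed

lemma tg_rmult: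
  assumes "topological_group G T" "x \<in> carrier G"
  shows "continuous_map T T (\<lambda>y. y \<otimes>\<^bsub>G\<^esub> x)"
proof -
  have m: "continuous_map (prod_topology T T) T (\<lambda>(x, y). x \<otimes>\<^bsub>G\<^esub> y)"
    using assms by (simp add: topological_group_def)
  have "continuous_map T (prod_topology T T) (\<lambda>y. (y, x))"
    using assms by (intro continuous_map_pairedI) (auto simp: topological_group_def)
  from continuous_map_compose[OF this m] show ?thesis by (simp add: o_def)
qed

lemma closure_normal:
  assumes tg: "topological_group G T" and N: "N \<lhd> G"
  shows "(T closure_of N) \<lhd> G"
proof -
  have G: "group G" using tg by (simp add: topological_group_def)
  interpret group G by (rule G)
  interpret N: normal N G by (rule N)
  have tsp: "topspace T = carrier G" using tg by (simp add: topological_group_def)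
  let ?K = "T closure_of N"
  have Ksub: "?K \<subseteq> carrier G" using closure_of_subset_topspace[of T N] tsp by simp
  have NK: "N \<subseteq> ?K" using closure_of_subset[of N T] N.subset tsp by simp
  have inv: "inv\<^bsub>G\<^esub> a \<in> ?K" if "a \<in> ?K" for a
  proof -
    have "(\<lambda>x. inv\<^bsub>G\<^esub> x) ` ?K \<subseteq> ?K"
      by (rule cl_invariant) (use tg in \<open>auto simp: topological_group_def\<close>)
    thus ?thesis using that by blast
  qed
  have hk: "a \<otimes>\<^bsub>G\<^esub> b \<in> ?K" if "a \<in> N" "b \<in> ?K" for a b
  proof -
    have "(\<lambda>y. a \<otimes>\<^bsub>G\<^esub> y) ` ?K \<subseteq> ?K"
      by (rule cl_invariant[OF tg_lmult[OF tg]]) (use that in auto)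
    thus ?thesis using that by blast
  qed
  have kk: "a \<otimes>\<^bsub>G\<^esub> b \<in> ?K" if "a \<in> ?K" "b \<in> ?K" for a b
  proof -
    have bc: "b \<in> carrier G" using that Ksub by blast
    have NbK: "(\<lambda>y. y \<otimes>\<^bsub>G\<^esub> b) ` N \<subseteq> ?K" using hk that(2) by blast
    have "(\<lambda>y. y \<otimes>\<^bsub>G\<^esub> b) ` ?K \<subseteq> T closure_of ((\<lambda>y. y \<otimes>\<^bsub>G\<^esub> b) ` N)"
      by (rule continuous_map_image_closure_subset[OF tg_rmult[OF tg bc]])
    also have "\<dots> \<subseteq> T closure_of ?K" by (rule closure_of_mono[OF NbK])
    finally show ?thesis using that by (simp add: image_subset_iff)
  qed
  have sg: "subgroup ?K G"
  proof (rule subgroupI[OF Ksub])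
    show "?K \<noteq> {}" using NK N.one_closed by blast
  qed (use inv kk in blast)+
  have conj: "x \<otimes>\<^bsub>G\<^esub> h \<otimes>\<^bsub>G\<^esub> inv\<^bsub>G\<^esub> x \<in> ?K" if "x \<in> carrier G" "h \<in> ?K" for x h
  proof -
    have c: "continuous_map T T (\<lambda>y. x \<otimes>\<^bsub>G\<^esub> y \<otimes>\<^bsub>G\<^esub> inv\<^bsub>G\<^esub> x)"
      using continuous_map_compose[OF tg_lmult[OF tg that(1)] tg_rmult[OF tg inv_closed[OF that(1)]]]
      by (simp add: o_def)
    have "(\<lambda>y. x \<otimes>\<^bsub>G\<^esub> y \<otimes>\<^bsub>G\<^esub> inv\<^bsub>G\<^esub> x) ` ?K \<subseteq> ?K"
      by (rule cl_invariant[OF c]) (use that N.inv_op_closed2 in auto)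
    thus ?thesis using that by blast
  qed
  show ?thesis using sg conj by (simp add: normal_inv_iff)
qed



lemma padic_matD:
  assumes "M \<in> padic_mat p n"
  shows "0 \<le> M k i j" "M k i j < int p ^ k" "\<not> (i < n \<and> j < n) \<Longrightarrow> M k i j = 0"
    "M k i j = M (Suc k) i j mod (int p ^ k)"
  using assms unfolding padic_mat_def by blast+

lemma padic_compat:
  assumes "M \<in> padic_mat p n" "a \<le> b"
  shows "M a i j = M b i j mod (int p ^ a)"
  using assms(2)
proof (induction b)
  case 0 then show ?case using padic_matD[OF assms(1), of 0 i j] by simp
next
  case (Suc b)
  show ?case
  proof (cases "a = Suc b")
    case True
    have "0 \<le> M a i j" "M a i j < int p ^ a" using padic_matD(1,2)[OF assms(1)] by auto
    then show ?thesis using True by simp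
  next
    case False
    then have ab: "a \<le> b" using Suc by simp
    have "M b i j = M (Suc b) i j mod int p ^ b" by (rule padic_matD[OF assms(1)])
    moreover have "int p ^ a dvd int p ^ b" using ab by (simp add: le_imp_power_dvd)
    ultimately show ?thesis using Suc.IH[OF ab] by (simp add: mod_mod_cancel)
  qed
qed

lemma GL_cong_iff:
  assumes M: "M \<in> padic_mat p n" and mb: "m \<le> b"
  shows "M \<in> GL_cong p n m \<longleftrightarrow>
     (\<forall>i<n. \<forall>j<n. int p ^ m dvd (M b i j - (if i = j then 1 else 0)))"
proof -
  have "M m = padic_one p n m \<longleftrightarrow> (\<forall>i j. M m i j = padic_one p n m i j)" by (simp add: fun_eq_iff)
  also have "\<dots> \<longleftrightarrow> (\<forall>i<n. \<forall>j<n. M m i j = padic_one p n m i j)"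
  proof -
    have "M m i j = padic_one p n m i j" if "\<not> (i < n \<and> j < n)" for i j
      using padic_matD(3)[OF M that] that by (auto simp: padic_one_def)
    thus ?thesis by blast
  qed
  also have "\<dots> \<longleftrightarrow> (\<forall>i<n. \<forall>j<n. int p ^ m dvd (M b i j - (if i = j then 1 else 0)))"
  proof -
    have "M m i j = padic_one p n m i j \<longleftrightarrow> int p ^ m dvd (M b i j - (if i = j then 1 else 0))"
      if "i < n" "j < n" for i j
      using padic_compat[OF M mb, of i j] that
      by (auto simp: padic_one_def mod_eq_dvd_iff)
    thus ?thesis by blast
  qed
  finally show ?thesis using M by (simp add: GL_cong_def)
qed

definition approx :: "nat \<Rightarrow> nat \<Rightarrow> nat \<Rightarrow> (nat \<Rightarrow> nat \<Rightarrow> nat \<Rightarrow> int) \<Rightarrow> (nat \<Rightarrow> nat \<Rightarrow> int) \<Rightarrow> bool" where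
  "approx p n k M F \<longleftrightarrow> (\<forall>i<n. \<forall>j<n. int p ^ (2*k) dvd (M (2*k) i j - (if i = j then 1 else 0) - F i j)
      \<and> int p ^ k dvd F i j)"

lemma approx_GL:
  assumes "M \<in> GL_cong p n k"
  shows "approx p n k M (\<lambda>i j. M (2*k) i j - (if i = j then 1 else 0))"
proof -
  have M: "M \<in> padic_mat p n" using assms by (simp add: GL_cong_def)
  have "\<forall>i<n. \<forall>j<n. int p ^ k dvd (M (2*k) i j - (if i = j then 1 else 0))"
    using GL_cong_iff[OF M, of k "2*k"] assms by simp
  thus ?thesis unfolding approx_def by simp
qed

lemma approx_unique:
  assumes "approx p n k M F" "approx p n k M E" "i < n" "j < n"
  shows "int p ^ (2*k) dvd (F i j - E i j)"
proof -
  define Xv where "Xv = M (2*k) i j - (if i = j then 1 else 0)"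
  have a: "int p ^ (2*k) dvd Xv - F i j" using assms(1,3,4) unfolding approx_def Xv_def by blast
  have b: "int p ^ (2*k) dvd Xv - E i j" using assms(2,3,4) unfolding approx_def Xv_def by blast
  have "F i j - E i j = (Xv - E i j) - (Xv - F i j)" by simp
  thus ?thesis using dvd_diff[OF b a] by simp
qed

lemma approx_level:
  assumes "approx p n k M F" "M \<in> padic_mat p n" "m \<le> 2*k"
  shows "M \<in> GL_cong p n m \<longleftrightarrow> (\<forall>i<n. \<forall>j<n. int p ^ m dvd F i j)"
proof -
  have d: "int p ^ m dvd int p ^ (2*k)" using assms(3) by (simp add: le_imp_power_dvd)
  have "int p ^ m dvd (M (2*k) i j - (if i = j then 1 else 0)) \<longleftrightarrow> int p ^ m dvd F i j"
    if "i < n" "j < n" for i j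
  proof -
    define Xv where "Xv = M (2*k) i j - (if i = j then 1 else 0)"
    have "int p ^ (2*k) dvd Xv - F i j" using assms(1) that unfolding approx_def Xv_def by blast
    then have a: "int p ^ m dvd Xv - F i j" by (rule dvd_trans[OF d])
    have "Xv = (Xv - F i j) + F i j" by simp
    then have "int p ^ m dvd Xv \<longleftrightarrow> int p ^ m dvd (Xv - F i j) + F i j" by simp
    also have "\<dots> \<longleftrightarrow> int p ^ m dvd F i j" by (rule dvd_add_right_iff[OF a])
    finally show ?thesis unfolding Xv_def .
  qed
  thus ?thesis using GL_cong_iff[OF assms(2,3)] by blast
qed

lemma approx_mult:
  assumes A: "approx p n k M F" and B: "approx p n k N E"
  shows "approx p n k (padic_mult p n M N) (\<lambda>i j. F i j + E i j)"
  unfolding approx_def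
proof (intro allI impI conjI)
  fix i j assume ij: "i < n" "j < n"
  let ?Q = "int p ^ (2*k)"
  let ?d = "\<lambda>i j. (if i = j then 1 else 0) :: int"
  have QQ: "?Q = int p ^ k * int p ^ k" by (simp add: mult_2 power_add)
  have Mc: "?Q dvd M (2*k) a b - (?d a b + F a b)" if "a < n" "b < n" for a b
  proof -
    have "?Q dvd M (2*k) a b - ?d a b - F a b" using A that unfolding approx_def by blast
    thus ?thesis by (simp add: diff_diff_eq)
  qed
  have Nc: "?Q dvd N (2*k) a b - (?d a b + E a b)" if "a < n" "b < n" for a b
  proof -
    have "?Q dvd N (2*k) a b - ?d a b - E a b" using B that unfolding approx_def by blast
    thus ?thesis by (simp add: diff_diff_eq)
  qed
  have FE: "?Q dvd F a b * E b c" if "a < n" "b < n" "c < n" for a b c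
  proof -
    have "int p ^ k dvd F a b" using A that unfolding approx_def by blast
    moreover have "int p ^ k dvd E b c" using B that unfolding approx_def by blast
    ultimately show ?thesis unfolding QQ by (rule mult_dvd_mono)
  qed
  have s1: "?Q dvd (\<Sum>l<n. M (2*k) i l * N (2*k) l j) - (\<Sum>l<n. (?d i l + F i l) * (?d l j + E l j))"
    unfolding sum_subtractf[symmetric]
  proof (rule dvd_sum)
    fix l assume "l \<in> {..<n}"
    then have l: "l < n" by simp
    have "M (2*k) i l * N (2*k) l j - (?d i l + F i l) * (?d l j + E l j)
       = M (2*k) i l * (N (2*k) l j - (?d l j + E l j)) + (M (2*k) i l - (?d i l + F i l)) * (?d l j + E l j)"
      by (simp add: algebra_simps)
    thus "?Q dvd M (2*k) i l * N (2*k) l j - (?d i l + F i l) * (?d l j + E l j)"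
      using Mc[OF ij(1) l] Nc[OF l ij(2)] by (simp add: dvd_add)
  qed
  have s2: "(\<Sum>l<n. (?d i l + F i l) * (?d l j + E l j))
     = ?d i j + F i j + E i j + (\<Sum>l<n. F i l * E l j)"
  proof -
    have "(\<Sum>l<n. (?d i l + F i l) * (?d l j + E l j))
        = (\<Sum>l<n. ?d i l * ?d l j) + (\<Sum>l<n. ?d i l * E l j) + (\<Sum>l<n. F i l * ?d l j) + (\<Sum>l<n. F i l * E l j)"
      by (simp add: algebra_simps sum.distrib)
    also have "(\<Sum>l<n. ?d i l * ?d l j) = ?d i j"
      using ij by (simp add: if_distrib[of "\<lambda>x. x * _"] sum.delta cong: if_cong)
    also have "(\<Sum>l<n. ?d i l * E l j) = E i j"
      using ij by (simp add: if_distrib[of "\<lambda>x. x * _"] sum.delta cong: if_cong)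
    also have "(\<Sum>l<n. F i l * ?d l j) = F i j"
      using ij by (simp add: if_distrib[of "\<lambda>x. _ * x"] sum.delta' cong: if_cong)
    finally show ?thesis by simp
  qed
  have s3: "?Q dvd (\<Sum>l<n. F i l * E l j)"
    by (rule dvd_sum) (use FE ij in auto)
  have s4: "?Q dvd (\<Sum>l<n. M (2*k) i l * N (2*k) l j) mod ?Q - (\<Sum>l<n. M (2*k) i l * N (2*k) l j)"
    by (simp add: mod_eq_dvd_iff[symmetric])
  have eq: "padic_mult p n M N (2*k) i j - ?d i j - (F i j + E i j)
     = ((\<Sum>l<n. M (2*k) i l * N (2*k) l j) mod ?Q - (\<Sum>l<n. M (2*k) i l * N (2*k) l j))
       + ((\<Sum>l<n. M (2*k) i l * N (2*k) l j) - (\<Sum>l<n. (?d i l + F i l) * (?d l j + E l j)))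
       + (\<Sum>l<n. F i l * E l j)"
    using ij s2 by (simp add: padic_mult_def)
  show "?Q dvd padic_mult p n M N (2*k) i j - ?d i j - (F i j + E i j)"
    unfolding eq by (intro dvd_add s1 s3 s4)
  have "int p ^ k dvd F i j" using A ij unfolding approx_def by blast
  moreover have "int p ^ k dvd E i j" using B ij unfolding approx_def by blast
  ultimately show "int p ^ k dvd F i j + E i j" by (rule dvd_add)
qed




definition cg :: "int \<Rightarrow> int \<Rightarrow> int \<Rightarrow> bool" where "cg Q x y \<longleftrightarrow> Q dvd (x - y)"

lemma cg_refl: "cg Q x x" by (simp add: cg_def)
lemma cg_sym: "cg Q x y \<Longrightarrow> cg Q y x"
  unfolding cg_def proof -
  assume "Q dvd x - y" then have "Q dvd - (x - y)" by (simp only: dvd_minus_iff)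
  thus "Q dvd y - x" by simp
qed
lemma cg_trans: "cg Q x y \<Longrightarrow> cg Q y z \<Longrightarrow> cg Q x z"
  unfolding cg_def proof -
  assume "Q dvd x - y" "Q dvd y - z"
  then have "Q dvd (x - y) + (y - z)" by (rule dvd_add)
  thus "Q dvd x - z" by simp
qed
lemma cg_add: "cg Q a b \<Longrightarrow> cg Q c d \<Longrightarrow> cg Q (a + c) (b + d)"
  unfolding cg_def proof -
  assume "Q dvd a - b" "Q dvd c - d"
  then have "Q dvd (a - b) + (c - d)" by (rule dvd_add)
  thus "Q dvd a + c - (b + d)" by (simp add: algebra_simps)
qed
lemma cg_dvd_iff: "cg Q a b \<Longrightarrow> d dvd Q \<Longrightarrow> d dvd a \<longleftrightarrow> d dvd b"
  unfolding cg_def proof -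
  assume "Q dvd a - b" "d dvd Q"
  then have h: "d dvd a - b" by (rule dvd_trans[rotated])
  have "a = b + (a - b)" by simp
  then have "d dvd a \<longleftrightarrow> d dvd b + (a - b)" by simp
  also have "\<dots> \<longleftrightarrow> d dvd b" by (rule dvd_add_left_iff[OF h])
  finally show ?thesis .
qed

lemma GL_down:
  assumes "M \<in> GL_cong p n b" "a \<le> b"
  shows "M \<in> GL_cong p n a"
proof -
  have M: "M \<in> padic_mat p n" using assms by (simp add: GL_cong_def)
  have "\<forall>i<n. \<forall>j<n. int p ^ b dvd (M b i j - (if i = j then 1 else 0))"
    using GL_cong_iff[OF M, of b b] assms by simp
  moreover have "int p ^ a dvd int p ^ b" using assms(2) by (simp add: le_imp_power_dvd)
  ultimately have "\<forall>i<n. \<forall>j<n. int p ^ a dvd (M b i j - (if i = j then 1 else 0))"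
    using dvd_trans by blast
  thus ?thesis using GL_cong_iff[OF M assms(2)] by simp
qed

lemma GL_closed:
  "closedin (GL1_topology p n) (GL_cong p n m \<inter> GL_cong p n 1)"
proof -
  let ?B = "{{M \<in> GL_cong p n 1. M k = A} | k A. True}"
  have top: "topspace (GL1_topology p n) = GL_cong p n 1"
  proof -
    have "\<Union>?B = GL_cong p n 1"
    proof
      show "\<Union>?B \<subseteq> GL_cong p n 1" by blast
      show "GL_cong p n 1 \<subseteq> \<Union>?B"
      proof
        fix M assume "M \<in> GL_cong p n 1"
        then have "M \<in> {M' \<in> GL_cong p n 1. M' 0 = M 0}" by simp
        moreover have "{M' \<in> GL_cong p n 1. M' 0 = M 0} \<in> ?B" by blast
        ultimately show "M \<in> \<Union>?B" by blast
      qed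
    qed
    thus ?thesis unfolding GL1_topology_def by simp
  qed
  have eq: "GL_cong p n 1 - (GL_cong p n m \<inter> GL_cong p n 1)
      = \<Union>{{M \<in> GL_cong p n 1. M m = A} | A. A \<noteq> padic_one p n m}"
    by (auto simp: GL_cong_def)
  have "openin (GL1_topology p n) (\<Union>{{M \<in> GL_cong p n 1. M m = A} | A. A \<noteq> padic_one p n m})"
  proof (rule openin_Union)
    fix S assume "S \<in> {{M \<in> GL_cong p n 1. M m = A} | A. A \<noteq> padic_one p n m}"
    then have "S \<in> ?B" by blast
    thus "openin (GL1_topology p n) S" unfolding GL1_topology_def by (rule topology_generated_by_Basis)
  qed
  thus ?thesis unfolding closedin_def top eq[symmetric] by blast
qed




theorem lemma3p2:
  fixes p n d :: nat
    and G :: "('a, 'b) monoid_scheme" and T :: "'a topology"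
    and \<rho> :: "'a \<Rightarrow> (nat \<Rightarrow> nat \<Rightarrow> nat \<Rightarrow> int)"
  assumes "Factorial_Ring.prime p" and "odd p"
    and "pro_p_group p G T"
    and "G Mod (closed_commutator G T) \<cong> product_group {..<d} (\<lambda>_. integer_mod_group p)"
    and "\<rho> \<in> hom G (GL1_group p n)"
    and "continuous_map T (GL1_topology p n) \<rho>"
    and "\<exists>g \<in> carrier G. \<rho> g \<noteq> padic_one p n"
  shows "\<exists>g \<in> carrier G. \<rho> g \<notin> GL_cong p n 2"
proof (rule ccontr)
  assume "\<not> ?thesis"
  hence all2: "\<forall>g\<in>carrier G. \<rho> g \<in> GL_cong p n 2" by blast
  have p0: "p > 0" using assms(1) prime_gt_0_nat by blast
  have tg: "topological_group G T" using assms(3) by (simp add: pro_p_group_def)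
  have grp: "group G" using tg by (simp add: topological_group_def)
  interpret group G by (rule grp)
  have tsp: "topspace T = carrier G" using tg by (simp add: topological_group_def)
  let ?C = "closed_commutator G T"
  have Cn: "?C \<lhd> G" unfolding closed_commutator_def
    by (rule closure_normal[OF tg derived_self_is_normal])
  have hpow: "g [^]\<^bsub>G\<^esub> p \<in> ?C" if "g \<in> carrier G" for g
    by (rule quot_pow[OF grp Cn p0 assms(4) that])
  have rc: "\<rho> g \<in> GL_cong p n 1" if "g \<in> carrier G" for g
    using assms(5) that by (auto simp: hom_def GL1_group_def)
  have rpm: "\<rho> g \<in> padic_mat p n" if "g \<in> carrier G" for g
    using rc[OF that] by (simp add: GL_cong_def)
  have rm: "\<rho> (g \<otimes>\<^bsub>G\<^esub> h) = padic_mult p n (\<rho> g) (\<rho> h)" if "g \<in> carrier G" "h \<in> carrier G" for g h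
    using assms(5) that by (simp add: hom_def GL1_group_def)
  obtain g0 where g0: "g0 \<in> carrier G" "\<rho> g0 \<noteq> padic_one p n" using assms(7) by blast
  have "\<exists>m. \<rho> g0 m \<noteq> padic_one p n m"
  proof (rule ccontr)
    assume "\<not> (\<exists>m. \<rho> g0 m \<noteq> padic_one p n m)"
    then have all: "\<forall>m. \<rho> g0 m = padic_one p n m" by blast
    have "\<rho> g0 = padic_one p n"
    proof (rule ext)
      fix m show "\<rho> g0 m = padic_one p n m" using all by (rule spec)
    qed
    with g0(2) show False by simp
  qed
  then obtain m0 where m0: "\<rho> g0 m0 \<noteq> padic_one p n m0" by blast
  have nm0: "\<rho> g0 \<notin> GL_cong p n m0" using m0 by (simp add: GL_cong_def)
  define P where "P j \<longleftrightarrow> (\<forall>g\<in>carrier G. \<rho> g \<in> GL_cong p n j)" for j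
  have exj: "\<exists>j. \<not> P j" using nm0 g0(1) unfolding P_def by blast
  define j0 where "j0 = (LEAST j. \<not> P j)"
  have nPj0: "\<not> P j0" unfolding j0_def by (rule LeastI_ex[OF exj])
  have Plow: "P j" if "j < j0" for j using not_less_Least[of j "\<lambda>j. \<not> P j"] that unfolding j0_def by blast
  have P2: "P j" if "j \<le> 2" for j unfolding P_def using all2 GL_down[of _ p n 2 j] that by blast
  have "\<not> j0 \<le> 2" using nPj0 P2 by blast
  then have j03: "j0 \<ge> 3" by simp
  define k where "k = j0 - 1"
  have k2: "k \<ge> 2" and Pk: "P k" and nPk1: "\<not> P (Suc k)"
    using j03 Plow nPj0 unfolding k_def by (auto simp: Suc_diff_1)
  let ?Q = "int p ^ (2*k)"
  define F where "F g = (\<lambda>i j. \<rho> g (2*k) i j - (if i = j then 1 else 0))" for g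
  have apx: "approx p n k (\<rho> g) (F g)" if "g \<in> carrier G" for g
    unfolding F_def by (rule approx_GL) (use Pk that in \<open>auto simp: P_def\<close>)
  have mulc: "cg ?Q (F (g \<otimes>\<^bsub>G\<^esub> h) i j) (F g i j + F h i j)"
    if "g \<in> carrier G" "h \<in> carrier G" "i < n" "j < n" for g h i j
  proof -
    have "approx p n k (\<rho> (g \<otimes>\<^bsub>G\<^esub> h)) (\<lambda>i j. F g i j + F h i j)"
      unfolding rm[OF that(1,2)] by (rule approx_mult[OF apx[OF that(1)] apx[OF that(2)]])
    from approx_unique[OF apx[OF m_closed[OF that(1,2)]] this that(3,4)]
    show ?thesis by (simp add: cg_def)
  qed
  have lev: "\<rho> g \<in> GL_cong p n m \<longleftrightarrow> (\<forall>i<n. \<forall>j<n. int p ^ m dvd F g i j)"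
    if "g \<in> carrier G" "m \<le> 2*k" for g m
    by (rule approx_level[OF apx[OF that(1)] rpm[OF that(1)] that(2)])
  have one0: "cg ?Q (F \<one>\<^bsub>G\<^esub> i j) 0" if "i < n" "j < n" for i j
  proof -
    have "cg ?Q (F \<one>\<^bsub>G\<^esub> i j) (F \<one>\<^bsub>G\<^esub> i j + F \<one>\<^bsub>G\<^esub> i j)"
      using mulc[OF one_closed one_closed that] by simp
    thus ?thesis unfolding cg_def by (simp add: algebra_simps)
  qed
  have invc: "cg ?Q (F (inv\<^bsub>G\<^esub> g) i j) (- F g i j)" if "g \<in> carrier G" "i < n" "j < n" for g i j
  proof -
    have a: "cg ?Q (F \<one>\<^bsub>G\<^esub> i j) (F (inv\<^bsub>G\<^esub> g) i j + F g i j)"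
      using mulc[OF inv_closed[OF that(1)] that] that by simp
    have "cg ?Q 0 (F (inv\<^bsub>G\<^esub> g) i j + F g i j)"
      by (rule cg_trans[OF cg_sym[OF one0[OF that(2,3)]] a])
    from cg_sym[OF this] show ?thesis unfolding cg_def by simp
  qed
  define K where "K = k + 2"
  have K2k: "K \<le> 2*k" using k2 unfolding K_def by simp
  have KQ: "int p ^ K dvd ?Q" using K2k by (simp add: le_imp_power_dvd)
  define S where "S = {g \<in> carrier G. \<rho> g \<in> GL_cong p n K}"
  have Siff: "g \<in> S \<longleftrightarrow> g \<in> carrier G \<and> (\<forall>i<n. \<forall>j<n. int p ^ K dvd F g i j)" for g
    unfolding S_def using lev[OF _ K2k] by blast
  have sgS: "subgroup S G"
  proof (rule subgroupI)
    show "S \<subseteq> carrier G" unfolding S_def by blast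
    have "\<one>\<^bsub>G\<^esub> \<in> S" unfolding Siff
      using cg_dvd_iff[OF one0 KQ] by simp
    thus "S \<noteq> {}" by blast
  next
    fix a assume a: "a \<in> S"
    then have ac: "a \<in> carrier G" by (simp add: Siff)
    show "inv\<^bsub>G\<^esub> a \<in> S" unfolding Siff
      using a ac cg_dvd_iff[OF invc KQ] by (simp add: Siff)
  next
    fix a b assume a: "a \<in> S" and b: "b \<in> S"
    then have ac: "a \<in> carrier G" and bc: "b \<in> carrier G" by (simp_all add: Siff)
    show "a \<otimes>\<^bsub>G\<^esub> b \<in> S" unfolding Siff
      using a b ac bc cg_dvd_iff[OF mulc[OF ac bc] KQ] by (simp add: Siff)
  qed
  have dsS: "derived_set G (carrier G) \<subseteq> S"
  proof clarify
    fix h1 h2 assume h: "h1 \<in> carrier G" "h2 \<in> carrier G"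
    show "h1 \<otimes>\<^bsub>G\<^esub> h2 \<otimes>\<^bsub>G\<^esub> inv\<^bsub>G\<^esub> h1 \<otimes>\<^bsub>G\<^esub> inv\<^bsub>G\<^esub> h2 \<in> S"
      unfolding Siff
    proof (intro conjI allI impI)
      show "h1 \<otimes>\<^bsub>G\<^esub> h2 \<otimes>\<^bsub>G\<^esub> inv\<^bsub>G\<^esub> h1 \<otimes>\<^bsub>G\<^esub> inv\<^bsub>G\<^esub> h2 \<in> carrier G"
        using h by simp
      fix i j assume ij: "i < n" "j < n"
      have c1: "cg ?Q (F (h1 \<otimes>\<^bsub>G\<^esub> h2) i j) (F h1 i j + F h2 i j)" by (rule mulc[OF h ij])
      have c2: "cg ?Q (F (h1 \<otimes>\<^bsub>G\<^esub> h2 \<otimes>\<^bsub>G\<^esub> inv\<^bsub>G\<^esub> h1) i j) (F (h1 \<otimes>\<^bsub>G\<^esub> h2) i j + F (inv\<^bsub>G\<^esub> h1) i j)"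
        by (rule mulc) (use h ij in auto)
      have c3: "cg ?Q (F (h1 \<otimes>\<^bsub>G\<^esub> h2 \<otimes>\<^bsub>G\<^esub> inv\<^bsub>G\<^esub> h1 \<otimes>\<^bsub>G\<^esub> inv\<^bsub>G\<^esub> h2) i j)
          (F (h1 \<otimes>\<^bsub>G\<^esub> h2 \<otimes>\<^bsub>G\<^esub> inv\<^bsub>G\<^esub> h1) i j + F (inv\<^bsub>G\<^esub> h2) i j)"
        by (rule mulc) (use h ij in auto)
      have "cg ?Q (F (h1 \<otimes>\<^bsub>G\<^esub> h2 \<otimes>\<^bsub>G\<^esub> inv\<^bsub>G\<^esub> h1 \<otimes>\<^bsub>G\<^esub> inv\<^bsub>G\<^esub> h2) i j)
          (((F h1 i j + F h2 i j) + (- F h1 i j)) + (- F h2 i j))"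
        by (rule cg_trans[OF c3 cg_add[OF cg_trans[OF c2 cg_add[OF c1 invc[OF h(1) ij]]] invc[OF h(2) ij]]])
      then have "cg ?Q (F (h1 \<otimes>\<^bsub>G\<^esub> h2 \<otimes>\<^bsub>G\<^esub> inv\<^bsub>G\<^esub> h1 \<otimes>\<^bsub>G\<^esub> inv\<^bsub>G\<^esub> h2) i j) 0" by simp
      thus "int p ^ K dvd F (h1 \<otimes>\<^bsub>G\<^esub> h2 \<otimes>\<^bsub>G\<^esub> inv\<^bsub>G\<^esub> h1 \<otimes>\<^bsub>G\<^esub> inv\<^bsub>G\<^esub> h2) i j"
        using cg_dvd_iff[OF _ KQ] by blast
    qed
  qed
  have dS: "derived G (carrier G) \<subseteq> S"
    unfolding derived_def by (rule generate_subgroup_incl[OF dsS sgS])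
  have Sclosed: "closedin T S"
  proof -
    have "S = {x \<in> topspace T. \<rho> x \<in> GL_cong p n K \<inter> GL_cong p n 1}"
      unfolding S_def tsp using rc by blast
    thus ?thesis using closedin_continuous_map_preimage[OF assms(6) GL_closed] by simp
  qed
  have CS: "?C \<subseteq> S" unfolding closed_commutator_def
    by (rule closure_of_minimal[OF dS Sclosed])
  obtain g1 where g1: "g1 \<in> carrier G" "\<rho> g1 \<notin> GL_cong p n (Suc k)" using nPk1 unfolding P_def by blast
  have powc: "cg ?Q (F (g1 [^]\<^bsub>G\<^esub> m) i j) (F \<one>\<^bsub>G\<^esub> i j + int m * F g1 i j)"
    if "i < n" "j < n" for m i j
  proof (induction m)
    case 0 then show ?case by (simp add: cg_refl)
  next
    case (Suc m)
    have "cg ?Q (F (g1 [^]\<^bsub>G\<^esub> m \<otimes>\<^bsub>G\<^esub> g1) i j) (F (g1 [^]\<^bsub>G\<^esub> m) i j + F g1 i j)"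
      by (rule mulc) (use g1 that in auto)
    from cg_trans[OF this cg_add[OF Suc cg_refl]]
    show ?case by (simp add: algebra_simps)
  qed
  have "g1 [^]\<^bsub>G\<^esub> p \<in> S" using CS hpow[OF g1(1)] by blast
  then have "\<forall>i<n. \<forall>j<n. int p ^ K dvd F (g1 [^]\<^bsub>G\<^esub> p) i j" by (simp add: Siff)
  have "\<forall>i<n. \<forall>j<n. int p ^ Suc k dvd F g1 i j"
  proof (intro allI impI)
    fix i j assume ij: "i < n" "j < n"
    have "cg ?Q (F (g1 [^]\<^bsub>G\<^esub> p) i j) (0 + int p * F g1 i j)"
      by (rule cg_trans[OF powc[OF ij] cg_add[OF one0[OF ij] cg_refl]])
    then have "int p ^ K dvd int p * F g1 i j"
      using cg_dvd_iff[OF _ KQ] \<open>\<forall>i<n. \<forall>j<n. int p ^ K dvd F (g1 [^]\<^bsub>G\<^esub> p) i j\<close> ij by auto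
    then have "int p * int p ^ Suc k dvd int p * F g1 i j" unfolding K_def by simp
    thus "int p ^ Suc k dvd F g1 i j" using p0 by (simp add: dvd_times_left_cancel_iff)
  qed
  then have "\<rho> g1 \<in> GL_cong p n (Suc k)" using lev[OF g1(1)] k2 by simp
  with g1 show False by simp
qed


end
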